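(* Fix a contact vector $\mathsf V\in\mathbb Z^n$ and a stable weighted dual graph $\mathsf G$ of genus $g$ with $n$ legs, with moduli cone $\sigma_{\mathsf G}=\mathbb R_{\ge0}^{E(\mathsf G)}$. Then the closure of the set of points of $\sigma_{\mathsf G}$ that lie in $\mathsf{DR}_g(\mathsf V)^{\mathrm{trop}}_{\#}$ and have a fixed rubber combinatorial type is a simplicial cone.
   Context: A point $p$ in the interior of $\sigma_{\mathsf G}$ gives a tropical curve $\Gamma_p$ (metric realization of $\mathsf G$ with edge lengths from $p$ and infinite legs). A balanced function with slopes $\mathsf V$ on it is a continuous function to $\mathbb R$, linear with integer slope on edges, with outgoing slopes summing to $0$ at every vertex, and slope $\mathsf V_j$ along leg $j$; it is unique up to additive constant if it exists. $\mathsf{DR}_g(\mathsf V)^{\mathrm{trop}}_{\#}\subset\mathcal M^{\mathrm{trop}}_{g,n}$ is the closure of the locus of tropical curves admitting such a function. For such $p$ and function $F$: the target graph $T$ is the subdivision of $\mathbb R$ with vertices at images of vertices of $\Gamma_p$; the semistable source graph $\Gamma$ is obtained by subdividing $\Gamma_p$ at preimages of the vertices of $T$ (new vertices of genus $0$); the rubber combinatorial type is the data of $\Gamma$, $T$, the graph map $\Gamma\to T$, and the slopes on edges and legs of $\Gamma$. *)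

theory Defs
  imports "HOL-Analysis.Analysis"
begin

text \<open>
A weighted dual graph with n legs is given by a finite vertex set Vs, an edge set E
(a subset of a finite type 'e, so that the moduli cone lives in real^'e),
endpoint maps src/tgt (an arbitrary reference orientation of each edge; loops allowed,
multi-edges allowed), genus weights h, and leg attachments leg j for j < n.
\<close>

definition stable_graph ::
  "'v set \<Rightarrow> 'e set \<Rightarrow> ('e \<Rightarrow> 'v) \<Rightarrow> ('e \<Rightarrow> 'v) \<Rightarrow> ('v \<Rightarrow> nat) \<Rightarrow> (nat \<Rightarrow> 'v) \<Rightarrow> nat \<Rightarrow> nat \<Rightarrow> bool"
where
  "stable_graph Vs E src tgt h leg n g \<longleftrightarrow>
     finite Vs \<and> finite E \<and> Vs \<noteq> {} \<and>
     (\<forall>e\<in>E. src e \<in> Vs \<and> tgt e \<in> Vs) \<and>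
     (\<forall>j<n. leg j \<in> Vs) \<and>
     (\<forall>u\<in>Vs. \<forall>w\<in>Vs. (u, w) \<in> ({(src e, tgt e) | e. e \<in> E} \<union> {(tgt e, src e) | e. e \<in> E})\<^sup>*) \<and>
     int (card E) - int (card Vs) + 1 + (\<Sum>v\<in>Vs. int (h v)) = int g \<and>
     (\<forall>v\<in>Vs. 2 * int (h v) - 2
        + int (card {e\<in>E. src e = v}) + int (card {e\<in>E. tgt e = v})
        + int (card {j. j < n \<and> leg j = v}) > 0)"

definition moduli_cone :: "'e set \<Rightarrow> (real ^ 'e) set" where
  "moduli_cone E = {p. \<forall>e. (e \<in> E \<longrightarrow> 0 \<le> p $ e) \<and> (e \<notin> E \<longrightarrow> p $ e = 0)}"

definition cone_interior :: "'e set \<Rightarrow> (real ^ 'e) set" where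
  "cone_interior E = {p. \<forall>e. (e \<in> E \<longrightarrow> 0 < p $ e) \<and> (e \<notin> E \<longrightarrow> p $ e = 0)}"

text \<open>
A balanced function on the tropical curve Gamma_p: a continuous function, linear with
integer slope on each edge, is determined by its vertex values f and its slopes s
(slope of edge e measured from src e towards tgt e); on leg j it has slope Vv j
(outgoing).
\<close>

definition balanced ::
  "'v set \<Rightarrow> 'e set \<Rightarrow> ('e \<Rightarrow> 'v) \<Rightarrow> ('e \<Rightarrow> 'v) \<Rightarrow> (nat \<Rightarrow> 'v) \<Rightarrow> nat \<Rightarrow> (nat \<Rightarrow> int)
     \<Rightarrow> real ^ 'e \<Rightarrow> ('v \<Rightarrow> real) \<Rightarrow> ('e \<Rightarrow> int) \<Rightarrow> bool"
where
  "balanced Vs E src tgt leg n Vv p f s \<longleftrightarrow>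
     (\<forall>e\<in>E. f (tgt e) - f (src e) = of_int (s e) * p $ e) \<and>
     (\<forall>v\<in>Vs. (\<Sum>e\<in>{e\<in>E. src e = v}. s e) - (\<Sum>e\<in>{e\<in>E. tgt e = v}. s e)
              + (\<Sum>j\<in>{j. j < n \<and> leg j = v}. Vv j) = 0)"

text \<open>Canonical names for the vertices/edges of the semistable source graph and
cells of the target graph T (T has vertices 0..k-1 in increasing order of their value
in R, bounded edges TEdge i between i and i+1, and two unbounded ends).\<close>

datatype ('v, 'e) svert = OrigV 'v | SubE 'e nat | SubL nat nat
datatype 'e sedge = EPiece 'e nat | LPiece nat nat | LEnd nat
datatype timg = TVert nat | TEdge nat | TLegPos | TLegNeg

definition trank :: "('v \<Rightarrow> real) \<Rightarrow> 'v set \<Rightarrow> real \<Rightarrow> nat" where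
  "trank f Vs x = card {y \<in> f ` Vs. y < x}"

text \<open>
The rubber combinatorial type: the number k of vertices of T; the vertices of the
subdivided source graph Gamma with their genus and image in T; the (bounded) edges of
Gamma with their endpoints (oriented as in G, resp. outwards along legs), image in T
and slope; and the legs of Gamma with attachment vertex, image in T and slope.
\<close>

definition rubber_type ::
  "'v set \<Rightarrow> 'e set \<Rightarrow> ('e \<Rightarrow> 'v) \<Rightarrow> ('e \<Rightarrow> 'v) \<Rightarrow> ('v \<Rightarrow> nat) \<Rightarrow> (nat \<Rightarrow> 'v) \<Rightarrow> nat
     \<Rightarrow> (nat \<Rightarrow> int) \<Rightarrow> ('v \<Rightarrow> real) \<Rightarrow> ('e \<Rightarrow> int)
     \<Rightarrow> nat \<times> (('v,'e) svert \<times> nat \<times> nat) set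
          \<times> ('e sedge \<times> ('v,'e) svert \<times> ('v,'e) svert \<times> timg \<times> int) set
          \<times> ('e sedge \<times> ('v,'e) svert \<times> timg \<times> int) set"
where
  "rubber_type Vs E src tgt h leg n Vv f s =
    (let k = card (f ` Vs);
         r = (\<lambda>v. trank f Vs (f v));
         ep = (\<lambda>e i. if i = r (src e) then OrigV (src e)
                      else if i = r (tgt e) then OrigV (tgt e) else SubE e i);
         lp = (\<lambda>j i. if i = r (leg j) then OrigV (leg j) else SubL j i);
         SV = {(OrigV v, h v, r v) | v. v \<in> Vs}
            \<union> {(SubE e i, 0, i) | e i. e \<in> E \<and> min (r (src e)) (r (tgt e)) < i
                                        \<and> i < max (r (src e)) (r (tgt e))}
            \<union> {(SubL j i, 0, i) | j i. j < n \<and>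
                   ((0 < Vv j \<and> r (leg j) < i \<and> i < k) \<or> (Vv j < 0 \<and> i < r (leg j)))};
         SE = {(EPiece e 0, OrigV (src e), OrigV (tgt e), TVert (r (src e)), 0) | e. e \<in> E \<and> s e = 0}
            \<union> {(EPiece e i, ep e i, ep e (Suc i), TEdge i, s e) | e i.
                   e \<in> E \<and> 0 < s e \<and> r (src e) \<le> i \<and> i < r (tgt e)}
            \<union> {(EPiece e i, ep e (Suc i), ep e i, TEdge i, s e) | e i.
                   e \<in> E \<and> s e < 0 \<and> r (tgt e) \<le> i \<and> i < r (src e)}
            \<union> {(LPiece j i, lp j i, lp j (Suc i), TEdge i, Vv j) | j i.
                   j < n \<and> 0 < Vv j \<and> r (leg j) \<le> i \<and> Suc i < k}
            \<union> {(LPiece j i, lp j (Suc i), lp j i, TEdge i, Vv j) | j i.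
                   j < n \<and> Vv j < 0 \<and> i < r (leg j)};
         SL = {(LEnd j, lp j (k - 1), TLegPos, Vv j) | j. j < n \<and> 0 < Vv j}
            \<union> {(LEnd j, lp j 0, TLegNeg, Vv j) | j. j < n \<and> Vv j < 0}
            \<union> {(LEnd j, OrigV (leg j), TVert (r (leg j)), 0) | j. j < n \<and> Vv j = 0}
     in (k, SV, SE, SL))"

definition simplicial_cone :: "'a::real_vector set \<Rightarrow> bool" where
  "simplicial_cone C \<longleftrightarrow>
     (\<exists>B. finite B \<and> independent B \<and> C = {\<Sum>b\<in>B. c b *\<^sub>R b | c. \<forall>b\<in>B. 0 \<le> c b})"

end

theory Submission
  imports Defs
begin


lemma sum_in_cc_hull:
  fixes w :: "'i \<Rightarrow> 'a::real_vector"
  assumes "finite A" "A \<subseteq> I" "\<forall>x\<in>A. 0 \<le> c x"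
  shows "(\<Sum>x\<in>A. c x *\<^sub>R w x) \<in> convex_cone hull (w ` I)"
  using assms
proof (induction A rule: finite_induct)
  case empty then show ?case by (simp add: convex_cone_hull_contains_0)
next
  case (insert x F)
  have "w x \<in> convex_cone hull (w ` I)" using insert by (simp add: hull_inc)
  then have "c x *\<^sub>R w x \<in> convex_cone hull (w ` I)" using insert by (simp add: convex_cone_hull_mul)
  then show ?case using insert by (simp add: convex_cone_hull_add)
qed

lemma cone_sum_hull:
  fixes w :: "'i \<Rightarrow> 'a::real_vector"
  assumes "finite I"
  shows "{\<Sum>x\<in>I. c x *\<^sub>R w x | c. \<forall>x\<in>I. 0 \<le> c x} = convex_cone hull (w ` I)" (is "?C = _")
proof
  show "?C \<subseteq> convex_cone hull (w ` I)" using sum_in_cc_hull[OF assms] by blast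
  have cc: "convex_cone ?C"
    unfolding convex_cone_iff
  proof (intro conjI ballI allI impI)
    show "0 \<in> ?C" by (rule CollectI, rule exI[of _ "\<lambda>_. 0"]) simp
  next
    fix x y assume "x \<in> ?C" "y \<in> ?C"
    then obtain c1 c2 where "x = (\<Sum>z\<in>I. c1 z *\<^sub>R w z)" "\<forall>z\<in>I. 0 \<le> c1 z"
      "y = (\<Sum>z\<in>I. c2 z *\<^sub>R w z)" "\<forall>z\<in>I. 0 \<le> c2 z" by blast
    then show "x + y \<in> ?C"
      by (intro CollectI exI[of _ "\<lambda>z. c1 z + c2 z"]) (simp add: sum.distrib scaleR_add_left)
  next
    fix x and a :: real assume "x \<in> ?C" "0 \<le> a"
    then obtain c1 where "x = (\<Sum>z\<in>I. c1 z *\<^sub>R w z)" "\<forall>z\<in>I. 0 \<le> c1 z" by blast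
    then show "a *\<^sub>R x \<in> ?C" using \<open>0 \<le> a\<close>
      by (intro CollectI exI[of _ "\<lambda>z. a * c1 z"]) (simp add: scaleR_sum_right)
  qed
  have sub: "w ` I \<subseteq> ?C"
  proof
    fix b assume "b \<in> w ` I"
    then obtain y where y: "y \<in> I" "b = w y" by blast
    have "(\<Sum>z\<in>I. (if z = y then 1 else 0) *\<^sub>R w z) = (\<Sum>z\<in>I. if z = y then w z else 0)"
      by (rule sum.cong) auto
    also have "\<dots> = w y" using y assms by simp
    finally have "(\<Sum>z\<in>I. (if z = y then 1 else 0) *\<^sub>R w z) = w y" .
    then show "b \<in> ?C" using y
      by (intro CollectI exI[of _ "\<lambda>z. if z = y then 1 else 0"]) auto
  qed
  show "convex_cone hull (w ` I) \<subseteq> ?C"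
    using cc sub by (simp add: hull_minimal)
qed

lemma closure_open_cone:
  fixes w :: "'i \<Rightarrow> 'a::euclidean_space"
  assumes "finite I"
  shows "closure {\<Sum>x\<in>I. c x *\<^sub>R w x | c. \<forall>x\<in>I. 0 < c x}
       = {\<Sum>x\<in>I. c x *\<^sub>R w x | c. \<forall>x\<in>I. 0 \<le> c x}"
proof
  have "closed {\<Sum>x\<in>I. c x *\<^sub>R w x | c. \<forall>x\<in>I. 0 \<le> c x}"
    using cone_sum_hull[OF assms, of w] closed_convex_cone_hull assms by (metis finite_imageI)
  then show "closure {\<Sum>x\<in>I. c x *\<^sub>R w x | c. \<forall>x\<in>I. 0 < c x}
       \<subseteq> {\<Sum>x\<in>I. c x *\<^sub>R w x | c. \<forall>x\<in>I. 0 \<le> c x}"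
    by (rule closure_minimal[rotated]) (auto intro: less_imp_le)
next
  show "{\<Sum>x\<in>I. c x *\<^sub>R w x | c. \<forall>x\<in>I. 0 \<le> c x}
       \<subseteq> closure {\<Sum>x\<in>I. c x *\<^sub>R w x | c. \<forall>x\<in>I. 0 < c x}"
  proof
    fix y assume "y \<in> {\<Sum>x\<in>I. c x *\<^sub>R w x | c. \<forall>x\<in>I. 0 \<le> c x}"
    then obtain c where y: "y = (\<Sum>x\<in>I. c x *\<^sub>R w x)" "\<forall>x\<in>I. 0 \<le> c x" by blast
    define s where "s = (\<lambda>n. \<Sum>x\<in>I. (c x + inverse (real (Suc n))) *\<^sub>R w x)"
    have "\<forall>n. s n \<in> {\<Sum>x\<in>I. c x *\<^sub>R w x | c. \<forall>x\<in>I. 0 < c x}"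
    proof
      fix n show "s n \<in> {\<Sum>x\<in>I. c x *\<^sub>R w x | c. \<forall>x\<in>I. 0 < c x}"
        unfolding s_def using y(2)
        by (intro CollectI exI[of _ "\<lambda>x. c x + inverse (real (Suc n))"])
           (auto simp: add_nonneg_pos)
    qed
    moreover have "s \<longlonglongrightarrow> y"
    proof -
      have "(\<lambda>n. c x + inverse (real (Suc n))) \<longlonglongrightarrow> c x" for x
        using tendsto_add[OF tendsto_const LIMSEQ_inverse_real_of_nat] by simp
      then show ?thesis unfolding s_def y(1)
        by (intro tendsto_sum tendsto_scaleR tendsto_const) auto
    qed
    ultimately show "y \<in> closure {\<Sum>x\<in>I. c x *\<^sub>R w x | c. \<forall>x\<in>I. 0 < c x}"
      unfolding closure_sequential by blast
  qed
qed

lemma simplicial_from_indep: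
  fixes w :: "'i \<Rightarrow> 'a::real_vector"
  assumes fin: "finite I" and ind: "\<forall>c. (\<Sum>x\<in>I. c x *\<^sub>R w x) = 0 \<longrightarrow> (\<forall>x\<in>I. c x = 0)"
  shows "simplicial_cone {\<Sum>x\<in>I. c x *\<^sub>R w x | c. \<forall>x\<in>I. 0 \<le> c x}"
proof -
  have inj: "inj_on w I"
  proof (rule inj_onI, rule ccontr)
    fix x y assume xy: "x \<in> I" "y \<in> I" "w x = w y" "x \<noteq> y"
    define c where "c = (\<lambda>z. if z = x then (1::real) else if z = y then -1 else 0)"
    have "\<And>z. c z *\<^sub>R w z = (if z = x then w x else 0) - (if z = y then w y else 0)"
      using xy unfolding c_def by auto
    then have "(\<Sum>z\<in>I. c z *\<^sub>R w z) = 0"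
      using xy fin by (simp add: sum_subtractf)
    then have "c x = 0" using ind xy by blast
    then show False unfolding c_def by simp
  qed
  have indep: "independent (w ` I)"
  proof -
    have fw: "finite (w ` I)" using fin by simp
    have "\<not> (\<exists>u. (\<exists>v\<in>w ` I. u v \<noteq> 0) \<and> (\<Sum>v\<in>w ` I. u v *\<^sub>R v) = 0)"
    proof
      assume "\<exists>u. (\<exists>v\<in>w ` I. u v \<noteq> 0) \<and> (\<Sum>v\<in>w ` I. u v *\<^sub>R v) = 0"
      then obtain u v where h: "v \<in> w ` I" "u v \<noteq> 0" "(\<Sum>v\<in>w ` I. u v *\<^sub>R v) = 0" by blast
      have "(\<Sum>x\<in>I. (u \<circ> w) x *\<^sub>R w x) = 0"
        using h(3) by (simp add: sum.reindex[OF inj])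
      then have "\<forall>x\<in>I. (u \<circ> w) x = 0" using ind by blast
      then show False using h by auto
    qed
    then show ?thesis using dependent_finite[OF fw] by simp
  qed
  have eq: "{\<Sum>b\<in>w ` I. c b *\<^sub>R b | c. \<forall>b\<in>w ` I. 0 \<le> c b}
          = {\<Sum>x\<in>I. c x *\<^sub>R w x | c. \<forall>x\<in>I. 0 \<le> c x}"
  proof (intro equalityI subsetI)
    fix y assume "y \<in> {\<Sum>b\<in>w ` I. c b *\<^sub>R b | c. \<forall>b\<in>w ` I. 0 \<le> c b}"
    then obtain c where "y = (\<Sum>b\<in>w ` I. c b *\<^sub>R b)" "\<forall>b\<in>w ` I. 0 \<le> c b" by blast
    then show "y \<in> {\<Sum>x\<in>I. c x *\<^sub>R w x | c. \<forall>x\<in>I. 0 \<le> c x}"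
      by (intro CollectI exI[of _ "c \<circ> w"]) (simp add: sum.reindex[OF inj])
  next
    fix y assume "y \<in> {\<Sum>x\<in>I. c x *\<^sub>R w x | c. \<forall>x\<in>I. 0 \<le> c x}"
    then obtain c where c: "y = (\<Sum>x\<in>I. c x *\<^sub>R w x)" "\<forall>x\<in>I. 0 \<le> c x" by blast
    have "y = (\<Sum>b\<in>w ` I. (c \<circ> inv_into I w) b *\<^sub>R b)"
      using c(1) by (simp add: sum.reindex[OF inj] inv_into_f_f[OF inj])
    moreover have "\<forall>b\<in>w ` I. 0 \<le> (c \<circ> inv_into I w) b"
      using c(2) by (auto simp: inv_into_f_f[OF inj])
    ultimately show "y \<in> {\<Sum>b\<in>w ` I. c b *\<^sub>R b | c. \<forall>b\<in>w ` I. 0 \<le> c b}" by blast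
  qed
  show ?thesis unfolding simplicial_cone_def
    using indep fin eq by (intro exI[of _ "w ` I"]) auto
qed



lemma trank_mono:
  assumes "finite Vs" "x \<in> f ` Vs" "y \<in> f ` Vs" "x < y"
  shows "trank f Vs x < trank f Vs y"
proof -
  have "{z \<in> f ` Vs. z < x} \<subset> {z \<in> f ` Vs. z < y}" using assms by auto
  then show ?thesis unfolding trank_def by (rule psubset_card_mono[rotated]) (use assms in auto)
qed

lemma trank_le_iff:
  assumes "finite Vs" "x \<in> f ` Vs" "y \<in> f ` Vs"
  shows "trank f Vs x \<le> trank f Vs y \<longleftrightarrow> x \<le> y"
  using trank_mono[OF assms(1,2,3)] trank_mono[OF assms(1,3,2)]
  by (metis leD le_less linorder_le_less_linear)

lemma trank_inj:
  assumes "finite Vs" shows "inj_on (trank f Vs) (f ` Vs)"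
  by (rule inj_onI) (metis assms trank_le_iff order_antisym order_refl)

lemma trank_less_card:
  assumes "finite Vs" "x \<in> f ` Vs"
  shows "trank f Vs x < card (f ` Vs)"
proof -
  have "{z \<in> f ` Vs. z < x} \<subset> f ` Vs" using assms by auto
  then show ?thesis unfolding trank_def using assms by (simp add: psubset_card_mono)
qed

lemma trank_image:
  assumes "finite Vs"
  shows "trank f Vs ` (f ` Vs) = {..<card (f ` Vs)}"
proof -
  have sub: "trank f Vs ` (f ` Vs) \<subseteq> {..<card (f ` Vs)}" using trank_less_card[OF assms] by auto
  have "card (trank f Vs ` (f ` Vs)) = card (f ` Vs)" using card_image[OF trank_inj[OF assms]] .
  then show ?thesis using sub by (simp add: card_subset_eq)
qed

lemma trank_comp:
  assumes "finite Vs" and mono: "\<forall>x\<in>f ` Vs. \<forall>y\<in>f ` Vs. x < y \<longrightarrow> \<phi> x < (\<phi> y::real)"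
    and "v \<in> Vs"
  shows "trank (\<lambda>u. \<phi> (f u)) Vs (\<phi> (f v)) = trank f Vs (f v)"
    and "card ((\<lambda>u. \<phi> (f u)) ` Vs) = card (f ` Vs)"
proof -
  have inj: "inj_on \<phi> (f ` Vs)"
    by (rule inj_onI) (metis mono linorder_neq_iff)
  have rev: "\<phi> a < \<phi> b \<Longrightarrow> a \<in> f ` Vs \<Longrightarrow> b \<in> f ` Vs \<Longrightarrow> a < b" for a b
    using mono by (metis linorder_neqE_linordered_idom not_less_iff_gr_or_eq)
  have img: "(\<lambda>u. \<phi> (f u)) ` Vs = \<phi> ` (f ` Vs)" by auto
  have "{z \<in> \<phi> ` (f ` Vs). z < \<phi> (f v)} = \<phi> ` {z \<in> f ` Vs. z < f v}"
    using assms rev by auto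
  then show "trank (\<lambda>u. \<phi> (f u)) Vs (\<phi> (f v)) = trank f Vs (f v)"
    unfolding trank_def img
    by (metis (no_types, lifting) card_image inj inj_on_subset mem_Collect_eq subsetI)
  show "card ((\<lambda>u. \<phi> (f u)) ` Vs) = card (f ` Vs)" unfolding img using card_image[OF inj] .
qed

lemma setcong1: "(\<And>x. P x = P' x) \<Longrightarrow> (\<And>x. P' x \<Longrightarrow> t x = t' x) \<Longrightarrow> {t x | x. P x} = {t' x | x. P' x}"
  by (intro equalityI subsetI; clarsimp; metis)

lemma setcong2: "(\<And>x y. P x y = P' x y) \<Longrightarrow> (\<And>x y. P' x y \<Longrightarrow> t x y = t' x y) \<Longrightarrow> {t x y | x y. P x y} = {t' x y | x y. P' x y}"
  by (intro equalityI subsetI; clarsimp; metis)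

lemma rubber_cong:
  assumes SE: "\<forall>e\<in>E. src e \<in> Vs \<and> tgt e \<in> Vs" and L: "\<forall>j<n. leg j \<in> Vs"
    and R: "\<And>v. v \<in> Vs \<Longrightarrow> trank f Vs (f v) = trank f' Vs (f' v)"
    and K: "card (f ` Vs) = card (f' ` Vs)"
  shows "rubber_type Vs E src tgt h leg n Vv f s = rubber_type Vs E src tgt h leg n Vv f' s"
proof -
  have a: "e \<in> E \<Longrightarrow> trank f Vs (f (src e)) = trank f' Vs (f' (src e))" for e using SE R by auto
  have b: "e \<in> E \<Longrightarrow> trank f Vs (f (tgt e)) = trank f' Vs (f' (tgt e))" for e using SE R by auto
  have c: "j < n \<Longrightarrow> trank f Vs (f (leg j)) = trank f' Vs (f' (leg j))" for j using L R by auto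
  show ?thesis unfolding rubber_type_def Let_def K
    apply (intro arg_cong2[where f=Pair] refl)
    subgoal apply (intro arg_cong2[where f="(\<union>)"])
      subgoal using R by auto
      subgoal by (intro Collect_cong ex_cong1 conj_cong refl; simp add: a b)
      subgoal by (intro Collect_cong ex_cong1 conj_cong refl; simp add: c) done
    subgoal apply (intro arg_cong2[where f="(\<union>)"])
      apply (rule setcong2 setcong1, simp add: a b c cong: conj_cong, simp add: a b c)+ done
    subgoal apply (intro arg_cong2[where f="(\<union>)"])
      apply (rule setcong2 setcong1, simp add: a b c cong: conj_cong, simp add: a b c)+ done
    done
qed


lemma rt_SV_in:
  "v \<in> Vs \<Longrightarrow> (OrigV v, h v, trank f Vs (f v)) \<in> fst (snd (rubber_type Vs E src tgt h leg n Vv f s))"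
  unfolding rubber_type_def Let_def by auto

lemma rt_SV_val:
  "(OrigV v, a, b) \<in> fst (snd (rubber_type Vs E src tgt h leg n Vv f s)) \<Longrightarrow> b = trank f Vs (f v)"
  unfolding rubber_type_def Let_def by auto

lemma rt_SE_val:
  "(EPiece e i, a, b, TEdge j, z) \<in> fst (snd (snd (rubber_type Vs E src tgt h leg n Vv f s))) \<Longrightarrow> z = s e"
  unfolding rubber_type_def Let_def by auto

lemma rt_SE_pos:
  assumes "e \<in> E" "0 < s e" "trank f Vs (f (src e)) < trank f Vs (f (tgt e))"
  shows "\<exists>a b. (EPiece e (trank f Vs (f (src e))), a, b, TEdge (trank f Vs (f (src e))), s e)
            \<in> fst (snd (snd (rubber_type Vs E src tgt h leg n Vv f s)))"
  using assms unfolding rubber_type_def Let_def by auto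

lemma rt_SE_neg:
  assumes "e \<in> E" "s e < 0" "trank f Vs (f (tgt e)) < trank f Vs (f (src e))"
  shows "\<exists>a b. (EPiece e (trank f Vs (f (tgt e))), a, b, TEdge (trank f Vs (f (tgt e))), s e)
            \<in> fst (snd (snd (rubber_type Vs E src tgt h leg n Vv f s)))"
  using assms unfolding rubber_type_def Let_def by auto

lemma telescope:
  fixes d :: "nat \<Rightarrow> real"
  assumes "a \<le> b"
  shows "(\<Sum>i<b. d i) - (\<Sum>i<a. d i) = (\<Sum>i\<in>{a..<b}. d i)"
proof -
  have "(\<Sum>i<b. d i) = (\<Sum>i\<in>{0..<a}. d i) + (\<Sum>i\<in>{a..<b}. d i)"
    using sum.atLeastLessThan_concat[of 0 a b d] assms by (simp add: atLeast0LessThan)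
  then show ?thesis by (simp add: atLeast0LessThan)
qed



theorem mainTheorem11:
  fixes Vs :: "'v set" and E :: "'e::finite set" and src tgt :: "'e \<Rightarrow> 'v"
    and h :: "'v \<Rightarrow> nat" and leg :: "nat \<Rightarrow> 'v" and n g :: nat
    and Vv :: "nat \<Rightarrow> int"
    and p0 :: "real ^ 'e" and f0 :: "'v \<Rightarrow> real" and s0 :: "'e \<Rightarrow> int"
  assumes "stable_graph Vs E src tgt h leg n g"
    and "p0 \<in> cone_interior E"
    and "balanced Vs E src tgt leg n Vv p0 f0 s0"
  shows "simplicial_cone
           (closure {p \<in> cone_interior E. \<exists>f s. balanced Vs E src tgt leg n Vv p f s \<and>
               rubber_type Vs E src tgt h leg n Vv f s = rubber_type Vs E src tgt h leg n Vv f0 s0})"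
proof -
  from assms(1) have finV: "finite Vs" and Vne: "Vs \<noteq> {}"
    and SE: "\<forall>e\<in>E. src e \<in> Vs \<and> tgt e \<in> Vs" and L: "\<forall>j<n. leg j \<in> Vs"
    and conn: "\<forall>u\<in>Vs. \<forall>w\<in>Vs. (u, w) \<in> ({(src e, tgt e) | e. e \<in> E} \<union> {(tgt e, src e) | e. e \<in> E})\<^sup>*"
    unfolding stable_graph_def by auto
  from assms(3) have bal0e: "\<forall>e\<in>E. f0 (tgt e) - f0 (src e) = of_int (s0 e) * p0 $ e"
    and bal0v: "\<forall>v\<in>Vs. (\<Sum>e\<in>{e\<in>E. src e = v}. s0 e) - (\<Sum>e\<in>{e\<in>E. tgt e = v}. s0 e)
              + (\<Sum>j\<in>{j. j < n \<and> leg j = v}. Vv j) = 0"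
    unfolding balanced_def by auto
  from assms(2) have p0pos: "\<forall>e\<in>E. 0 < p0 $ e" unfolding cone_interior_def by auto
  define r0 where "r0 = (\<lambda>v. trank f0 Vs (f0 v))"
  define k0 where "k0 = card (f0 ` Vs)"
  have r0img: "r0 ` Vs = {..<k0}"
    using trank_image[OF finV, of f0] unfolding r0_def k0_def by (simp add: image_image)
  have r0lt: "v \<in> Vs \<Longrightarrow> r0 v < k0" for v using r0img by auto
  have r0le: "u \<in> Vs \<Longrightarrow> v \<in> Vs \<Longrightarrow> r0 u \<le> r0 v \<longleftrightarrow> f0 u \<le> f0 v" for u v
    unfolding r0_def using trank_le_iff[OF finV] by blast
  have sgnpos: "r0 (src e) < r0 (tgt e)" if "e \<in> E" "0 < s0 e" for e
  proof -
    have "0 < real_of_int (s0 e) * p0 $ e" using p0pos that by (simp add: mult_pos_pos)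
    then have "f0 (src e) < f0 (tgt e)" using bal0e that by (metis diff_gt_0_iff_gt)
    then show ?thesis using r0le SE that by (meson not_le)
  qed
  have sgnneg: "r0 (tgt e) < r0 (src e)" if "e \<in> E" "s0 e < 0" for e
  proof -
    have "real_of_int (s0 e) * p0 $ e < 0" using p0pos that by (simp add: mult_neg_pos)
    then have "f0 (tgt e) < f0 (src e)" using bal0e that by (metis diff_less_0_iff_less)
    then show ?thesis using r0le SE that by (meson not_le)
  qed
  have sgnz: "r0 (tgt e) = r0 (src e)" if "e \<in> E" "s0 e = 0" for e
    using bal0e that unfolding r0_def by auto
  define Z where "Z = {e\<in>E. s0 e = 0}"
  define lo where "lo = (\<lambda>e. min (r0 (src e)) (r0 (tgt e)))"
  define hi where "hi = (\<lambda>e. max (r0 (src e)) (r0 (tgt e)))"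
  define W :: "nat + 'e \<Rightarrow> 'e \<Rightarrow> real" where
    "W = (\<lambda>x e. case x of Inl i \<Rightarrow> (if e \<in> E \<and> s0 e \<noteq> 0 \<and> lo e \<le> i \<and> i < hi e
                                    then 1 / \<bar>real_of_int (s0 e)\<bar> else 0)
                       | Inr e' \<Rightarrow> (if e = e' then 1 else 0))"
  define w where "w = (\<lambda>x. vec_lambda (W x))"
  define I where "I = Inl ` {..<k0 - 1} \<union> Inr ` Z"
  have finI: "finite I" unfolding I_def by simp
  have hik: "e \<in> E \<Longrightarrow> hi e \<le> k0 - 1" for e using r0lt SE unfolding hi_def by fastforce
  have comp: "(\<Sum>x\<in>I. c x *\<^sub>R w x) $ e =
      (if e \<in> E \<and> s0 e \<noteq> 0 then (\<Sum>i\<in>{lo e..<hi e}. c (Inl i)) / \<bar>real_of_int (s0 e)\<bar> else 0)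
      + (if e \<in> Z then c (Inr e) else 0)" for c e
  proof -
    have "(\<Sum>x\<in>I. c x *\<^sub>R w x) $ e = (\<Sum>x\<in>I. c x * W x e)"
      unfolding w_def by simp
    also have "\<dots> = (\<Sum>i\<in>{..<k0 - 1}. c (Inl i) * W (Inl i) e) + (\<Sum>e'\<in>Z. c (Inr e') * W (Inr e') e)"
      unfolding I_def
      by (subst sum.union_disjoint) (auto simp: sum.reindex Z_def)
    also have "(\<Sum>e'\<in>Z. c (Inr e') * W (Inr e') e) = (if e \<in> Z then c (Inr e) else 0)"
    proof -
      have "(\<Sum>e'\<in>Z. c (Inr e') * W (Inr e') e) = (\<Sum>e'\<in>Z. if e = e' then c (Inr e) else 0)"
        by (intro sum.cong) (auto simp: W_def)
      then show ?thesis by simp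
    qed
    also have "(\<Sum>i\<in>{..<k0 - 1}. c (Inl i) * W (Inl i) e) =
       (if e \<in> E \<and> s0 e \<noteq> 0 then (\<Sum>i\<in>{lo e..<hi e}. c (Inl i)) / \<bar>real_of_int (s0 e)\<bar> else 0)"
    proof (cases "e \<in> E \<and> s0 e \<noteq> 0")
      case True
      have "(\<Sum>i\<in>{..<k0 - 1}. c (Inl i) * W (Inl i) e)
          = (\<Sum>i\<in>{..<k0 - 1}. if i \<in> {lo e..<hi e} then c (Inl i) / \<bar>real_of_int (s0 e)\<bar> else 0)"
        unfolding W_def using True by (intro sum.cong) auto
      also have "\<dots> = (\<Sum>i\<in>{..<k0 - 1} \<inter> {lo e..<hi e}. c (Inl i) / \<bar>real_of_int (s0 e)\<bar>)"
        by (simp add: sum.inter_restrict)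
      also have "{..<k0 - 1} \<inter> {lo e..<hi e} = {lo e..<hi e}" using hik[of e] True by auto
      finally show ?thesis using True by (simp add: sum_divide_distrib)
    qed (auto simp: W_def)
    finally show ?thesis .
  qed
  have S_eq: "{p \<in> cone_interior E. \<exists>f s. balanced Vs E src tgt leg n Vv p f s \<and>
               rubber_type Vs E src tgt h leg n Vv f s = rubber_type Vs E src tgt h leg n Vv f0 s0}
        = {\<Sum>x\<in>I. c x *\<^sub>R w x | c. \<forall>x\<in>I. 0 < c x}" (is "?S = ?T")
  proof (intro equalityI subsetI)
    fix p assume "p \<in> ?S"
    then obtain f s where pint: "p \<in> cone_interior E" and bal: "balanced Vs E src tgt leg n Vv p f s"
      and rt: "rubber_type Vs E src tgt h leg n Vv f s = rubber_type Vs E src tgt h leg n Vv f0 s0" by blast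
    from pint have ppos: "\<forall>e\<in>E. 0 < p $ e" and pz: "\<forall>e. e \<notin> E \<longrightarrow> p $ e = 0"
      unfolding cone_interior_def by auto
    from bal have bale: "\<forall>e\<in>E. f (tgt e) - f (src e) = of_int (s e) * p $ e"
      unfolding balanced_def by auto
    have kf: "card (f ` Vs) = k0" using arg_cong[OF rt, of fst] unfolding rubber_type_def Let_def k0_def by simp
    have rfr: "trank f Vs (f v) = r0 v" if "v \<in> Vs" for v
    proof -
      have "(OrigV v, h v, r0 v) \<in> fst (snd (rubber_type Vs E src tgt h leg n Vv f s))"
        using rt_SV_in[OF that, of h f0 E src tgt leg n Vv s0] rt unfolding r0_def by simp
      then show ?thesis by (rule rt_SV_val[symmetric])
    qed
    have ss: "s e = s0 e" if eE: "e \<in> E" and nz: "s0 e \<noteq> 0" for e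
    proof (cases "0 < s0 e")
      case True
      then obtain a b where "(EPiece e (r0 (src e)), a, b, TEdge (r0 (src e)), s0 e)
          \<in> fst (snd (snd (rubber_type Vs E src tgt h leg n Vv f0 s0)))"
        using rt_SE_pos[of e E s0 f0 Vs src tgt h leg n Vv] eE sgnpos unfolding r0_def by blast
      then have "(EPiece e (r0 (src e)), a, b, TEdge (r0 (src e)), s0 e)
          \<in> fst (snd (snd (rubber_type Vs E src tgt h leg n Vv f s)))" using rt by simp
      from rt_SE_val[OF this] show ?thesis by simp
    next
      case False
      then have "s0 e < 0" using nz by simp
      then obtain a b where "(EPiece e (r0 (tgt e)), a, b, TEdge (r0 (tgt e)), s0 e)
          \<in> fst (snd (snd (rubber_type Vs E src tgt h leg n Vv f0 s0)))"
        using rt_SE_neg[of e E s0 f0 Vs tgt src h leg n Vv] eE sgnneg unfolding r0_def by blast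
      then have "(EPiece e (r0 (tgt e)), a, b, TEdge (r0 (tgt e)), s0 e)
          \<in> fst (snd (snd (rubber_type Vs E src tgt h leg n Vv f s)))" using rt by simp
      from rt_SE_val[OF this] show ?thesis by simp
    qed
    define g where "g = inv_into (f ` Vs) (trank f Vs)"
    have injf: "inj_on (trank f Vs) (f ` Vs)" by (rule trank_inj[OF finV])
    have imgf: "trank f Vs ` (f ` Vs) = {..<k0}" using trank_image[OF finV, of f] kf by simp
    have gv: "g (r0 v) = f v" if "v \<in> Vs" for v
    proof -
      have "g (trank f Vs (f v)) = f v" unfolding g_def using injf that by simp
      then show ?thesis using rfr[OF that] by simp
    qed
    have gin: "g i \<in> f ` Vs" if "i < k0" for i
      unfolding g_def using that imgf by (intro inv_into_into) auto
    have grank: "trank f Vs (g i) = i" if "i < k0" for i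
      unfolding g_def using that imgf by (intro f_inv_into_f) auto
    have gmono: "g i \<le> g j" if "i \<le> j" "j < k0" for i j
      using trank_le_iff[OF finV gin[of i] gin[of j]] grank[of i] grank[of j] that by simp
    have gstrict: "g i < g j" if "i < j" "j < k0" for i j
      using gmono[of i j] grank[of i] grank[of j] that by (metis less_le order.strict_trans)
    define c where "c = (\<lambda>x. case x of Inl i \<Rightarrow> g (Suc i) - g i | Inr e \<Rightarrow> p $ e)"
    have cpos: "\<forall>x\<in>I. 0 < c x"
    proof
      fix x assume "x \<in> I"
      then consider (l) i where "x = Inl i" "i < k0 - 1" | (r) e where "x = Inr e" "e \<in> Z"
        unfolding I_def by auto
      then show "0 < c x"
      proof cases
        case l then show ?thesis using gstrict[of i "Suc i"] unfolding c_def by simp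
      next
        case r then show ?thesis using ppos unfolding c_def Z_def by simp
      qed
    qed
    have peq: "p = (\<Sum>x\<in>I. c x *\<^sub>R w x)"
    proof (subst vec_eq_iff, intro allI)
      fix e
      show "p $ e = (\<Sum>x\<in>I. c x *\<^sub>R w x) $ e"
      proof (cases "e \<in> E")
        case False then show ?thesis using pz comp[of c e] by (simp add: Z_def)
      next
        case eE: True
        show ?thesis
        proof (cases "s0 e = 0")
          case True then show ?thesis using comp[of c e] eE by (simp add: Z_def c_def)
        next
          case False
          have lh: "lo e \<le> hi e" unfolding lo_def hi_def by simp
          have tel: "(\<Sum>i\<in>{lo e..<hi e}. c (Inl i)) = g (hi e) - g (lo e)"
            unfolding c_def using sum_Suc_diff'[OF lh, of g] by simp
          have srcin: "src e \<in> Vs" and tgtin: "tgt e \<in> Vs" using SE eE by auto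
          have abs1: "g (hi e) - g (lo e) = \<bar>f (tgt e) - f (src e)\<bar>"
          proof (cases "r0 (src e) \<le> r0 (tgt e)")
            case True
            then have "f (src e) \<le> f (tgt e)"
              using gmono[OF True r0lt[OF tgtin]] gv[OF srcin] gv[OF tgtin] by simp
            then show ?thesis using True gv[OF srcin] gv[OF tgtin] unfolding lo_def hi_def by simp
          next
            case False
            then have F: "r0 (tgt e) \<le> r0 (src e)" by simp
            then have "f (tgt e) \<le> f (src e)"
              using gmono[OF F r0lt[OF srcin]] gv[OF srcin] gv[OF tgtin] by simp
            then show ?thesis using F gv[OF srcin] gv[OF tgtin] unfolding lo_def hi_def by simp
          qed
          have abs2: "\<bar>f (tgt e) - f (src e)\<bar> = \<bar>real_of_int (s0 e)\<bar> * p $ e"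
            using bale ss[OF eE False] ppos eE by (simp add: abs_mult abs_of_pos)
          have "(\<Sum>x\<in>I. c x *\<^sub>R w x) $ e = (g (hi e) - g (lo e)) / \<bar>real_of_int (s0 e)\<bar>"
            using comp[of c e] eE False tel by (simp add: Z_def)
          also have "\<dots> = p $ e" using abs1 abs2 False by simp
          finally show ?thesis by simp
        qed
      qed
    qed
    show "p \<in> ?T" using peq cpos by blast
  next
    fix p assume "p \<in> ?T"
    then obtain c where pc: "p = (\<Sum>x\<in>I. c x *\<^sub>R w x)" and cpos: "\<forall>x\<in>I. 0 < c x" by blast
    define G where "G = (\<lambda>j. \<Sum>i<j. c (Inl i))"
    have Gdiff: "G b - G a = (\<Sum>i\<in>{a..<b}. c (Inl i))" if "a \<le> b" for a b
      unfolding G_def using that by (rule telescope)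
    have Gstrict: "G a < G b" if ab: "a < b" "b < k0" for a b
    proof -
      have "0 < (\<Sum>i\<in>{a..<b}. c (Inl i))"
      proof (rule sum_pos)
        fix i assume "i \<in> {a..<b}"
        then have "Inl i \<in> I" using ab unfolding I_def by auto
        then show "0 < c (Inl i)" using cpos by blast
      qed (use ab in auto)
      then show ?thesis using Gdiff[of a b] ab by simp
    qed
    have phimono: "\<forall>x\<in>f0 ` Vs. \<forall>y\<in>f0 ` Vs. x < y \<longrightarrow> G (trank f0 Vs x) < G (trank f0 Vs y)"
      using trank_mono[OF finV] trank_less_card[OF finV] Gstrict unfolding k0_def by blast
    define f where "f = (\<lambda>v. G (trank f0 Vs (f0 v)))"
    have fR: "trank f Vs (f v) = trank f0 Vs (f0 v)" if "v \<in> Vs" for v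
      using trank_comp(1)[OF finV phimono that] unfolding f_def .
    have fK: "card (f ` Vs) = card (f0 ` Vs)"
    proof -
      obtain v0 where "v0 \<in> Vs" using Vne by blast
      from trank_comp(2)[OF finV phimono this] show ?thesis unfolding f_def .
    qed
    have pe: "p $ e = (if e \<in> E \<and> s0 e \<noteq> 0 then (G (hi e) - G (lo e)) / \<bar>real_of_int (s0 e)\<bar> else 0)
        + (if e \<in> Z then c (Inr e) else 0)" for e
      using comp[of c e] Gdiff[of "lo e" "hi e"] unfolding pc by (simp add: lo_def hi_def)
    have pint: "p \<in> cone_interior E"
      unfolding cone_interior_def
    proof (intro CollectI allI conjI impI)
      fix e assume eE: "e \<in> E"
      show "0 < p $ e"
      proof (cases "s0 e = 0")
        case True
        then have "Inr e \<in> I" using eE unfolding I_def Z_def by auto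
        then show ?thesis using pe[of e] cpos True eE by (simp add: Z_def)
      next
        case False
        have "lo e < hi e" using sgnpos[OF eE] sgnneg[OF eE] False unfolding lo_def hi_def
          by (cases "0 < s0 e") auto
        moreover have "hi e < k0" using r0lt SE eE unfolding hi_def by auto
        ultimately have "G (lo e) < G (hi e)" using Gstrict by blast
        then show ?thesis using pe[of e] False eE by (simp add: Z_def)
      qed
    next
      fix e assume "e \<notin> E"
      then show "p $ e = 0" using pe[of e] by (simp add: Z_def)
    qed
    have bal: "balanced Vs E src tgt leg n Vv p f s0"
      unfolding balanced_def
    proof (intro conjI ballI)
      fix v assume "v \<in> Vs"
      then show "(\<Sum>e\<in>{e\<in>E. src e = v}. s0 e) - (\<Sum>e\<in>{e\<in>E. tgt e = v}. s0 e)
              + (\<Sum>j\<in>{j. j < n \<and> leg j = v}. Vv j) = 0" using bal0v by blast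
    next
      fix e assume eE: "e \<in> E"
      show "f (tgt e) - f (src e) = of_int (s0 e) * p $ e"
      proof -
        consider "0 < s0 e" | "s0 e < 0" | "s0 e = 0" by linarith
        then show ?thesis
        proof cases
          case 1
          then have "lo e = r0 (src e)" "hi e = r0 (tgt e)" using sgnpos[OF eE] unfolding lo_def hi_def by auto
          then show ?thesis using pe[of e] eE 1 unfolding f_def r0_def by (simp add: Z_def)
        next
          case 2
          then have "lo e = r0 (tgt e)" "hi e = r0 (src e)" using sgnneg[OF eE] unfolding lo_def hi_def by auto
          then show ?thesis using pe[of e] eE 2 unfolding f_def r0_def by (simp add: Z_def)
        next
          case 3
          then show ?thesis using sgnz[OF eE] unfolding f_def r0_def by simp
        qed
      qed
    qed
    have "rubber_type Vs E src tgt h leg n Vv f s0 = rubber_type Vs E src tgt h leg n Vv f0 s0"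
      by (rule rubber_cong[OF SE L fR fK])
    then show "p \<in> ?S" using pint bal by blast
  qed
  have indep: "\<forall>c. (\<Sum>x\<in>I. c x *\<^sub>R w x) = 0 \<longrightarrow> (\<forall>x\<in>I. c x = 0)"
  proof (intro allI impI)
    fix c assume c0: "(\<Sum>x\<in>I. c x *\<^sub>R w x) = 0"
    have cz: "c (Inr e) = 0" if "e \<in> Z" for e
      using comp[of c e] c0 that by (simp add: Z_def)
    define G where "G = (\<lambda>j. \<Sum>i<j. c (Inl i))"
    have Ge: "G (r0 (src e)) = G (r0 (tgt e))" if "e \<in> E" for e
    proof (cases "s0 e = 0")
      case True then show ?thesis using sgnz that by simp
    next
      case False
      have "(\<Sum>i\<in>{lo e..<hi e}. c (Inl i)) / \<bar>real_of_int (s0 e)\<bar> = 0"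
        using comp[of c e] c0 that False by (simp add: Z_def)
      then have "(\<Sum>i\<in>{lo e..<hi e}. c (Inl i)) = 0" using False by simp
      moreover have "G (hi e) - G (lo e) = (\<Sum>i\<in>{lo e..<hi e}. c (Inl i))"
        unfolding G_def by (rule telescope) (simp add: lo_def hi_def)
      ultimately have "G (hi e) = G (lo e)" by simp
      then show ?thesis unfolding lo_def hi_def by (cases "r0 (src e) \<le> r0 (tgt e)") (auto simp: max_def min_def)
    qed
    have path: "(u, v) \<in> ({(src e, tgt e) | e. e \<in> E} \<union> {(tgt e, src e) | e. e \<in> E})\<^sup>* \<Longrightarrow> G (r0 u) = G (r0 v)" for u v
    proof (induction rule: rtrancl_induct)
      case base then show ?case by simp
    next
      case (step y z) then show ?case using Ge by auto
    qed
    obtain v0 where v0: "v0 \<in> Vs" using Vne by blast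
    have Gc: "j < k0 \<Longrightarrow> G j = G (r0 v0)" for j
    proof -
      assume "j < k0"
      then obtain u where "u \<in> Vs" "r0 u = j" using r0img by (metis imageE lessThan_iff)
      moreover have "(u, v0) \<in> ({(src e, tgt e) | e. e \<in> E} \<union> {(tgt e, src e) | e. e \<in> E})\<^sup>*"
        using conn v0 \<open>u \<in> Vs\<close> by blast
      ultimately show ?thesis using path by blast
    qed
    show "\<forall>x\<in>I. c x = 0"
    proof
      fix x assume "x \<in> I"
      then consider (l) i where "x = Inl i" "i < k0 - 1" | (r) e where "x = Inr e" "e \<in> Z"
        unfolding I_def by auto
      then show "c x = 0"
      proof cases
        case l
        have "G (Suc i) = G i + c (Inl i)" unfolding G_def by simp
        moreover have "G (Suc i) = G i" using Gc[of i] Gc[of "Suc i"] l by simp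
        ultimately show ?thesis using l by simp
      next
        case r then show ?thesis using cz by simp
      qed
    qed
  qed
  show ?thesis
    unfolding S_eq closure_open_cone[OF finI] using simplicial_from_indep[OF finI indep] .
qed

end
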